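(* There exists a temporal graph $\mathcal G$ (in the "strict" setting, i.e. with strict journeys) such that no simple temporal graph $\mathcal H$ has a strict-journey reachability graph isomorphic to $\mathcal C(\mathcal G)$. (For instance, $\mathcal G$ the path $a-b-c-d$ with $\lambda(ab)=\{1\}$, $\lambda(bc)=\{1,2\}$, $\lambda(cd)=\{2\}$.)
   Context: A temporal graph is a triple $\mathcal G=(V,E,\lambda)$ where $V$ is a finite vertex set, $E$ is a set of undirected edges on $V$, and $\lambda:E\to 2^{\mathbb N}\setminus\{\emptyset\}$ assigns to each edge a nonempty set of presence times. The footprint of $\mathcal G$ is the static graph $(V,E)$. A contact is a pair $(e,t)$ with $e\in E$ and $t\in\lambda(e)$. A journey from $u$ to $v$ is a sequence of contacts $(e_1,t_1),\dots,(e_k,t_k)$, $k\ge 1$, such that $e_1,\dots,e_k$ form a path from $u$ to $v$ in the footprint and $t_1\le t_2\le\dots\le t_k$ (a non-strict journey); it is strict if $t_1<t_2<\dots<t_k$. $\mathcal G$ is simple if $|\lambda(e)|=1$ for every edge $e$. The reachability graph $\mathcal C(\mathcal G)$ (with respect to a chosen journey notion) is the directed graph on $V$ having an arc $(u,v)$, $u\neq v$, if and only if there is a journey from $u$ to $v$. Reachability graphs are compared up to isomorphism of directed graphs. *)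

theory Defs
  imports Main
begin

type_synonym 'a tgraph = "'a set \<times> 'a set set \<times> ('a set \<Rightarrow> nat set)"

definition tverts :: "'a tgraph \<Rightarrow> 'a set" where "tverts G = fst G"
definition tedges :: "'a tgraph \<Rightarrow> 'a set set" where "tedges G = fst (snd G)"
definition tlabel :: "'a tgraph \<Rightarrow> 'a set \<Rightarrow> nat set" where "tlabel G = snd (snd G)"

definition temporal_graph :: "'a tgraph \<Rightarrow> bool" where
  "temporal_graph G \<longleftrightarrow> finite (tverts G) \<and>
     (\<forall>e\<in>tedges G. \<exists>u v. u \<noteq> v \<and> u \<in> tverts G \<and> v \<in> tverts G \<and> e = {u, v}) \<and>
     (\<forall>e\<in>tedges G. tlabel G e \<noteq> {})"

definition simple_tgraph :: "'a tgraph \<Rightarrow> bool" where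
  "simple_tgraph G \<longleftrightarrow> (\<forall>e\<in>tedges G. card (tlabel G e) = 1)"

definition strict_journey :: "'a tgraph \<Rightarrow> 'a \<Rightarrow> 'a \<Rightarrow> bool" where
  "strict_journey G u v \<longleftrightarrow> (\<exists>xs ts.
     length xs \<ge> 2 \<and> distinct xs \<and> hd xs = u \<and> last xs = v \<and>
     length ts = length xs - 1 \<and>
     (\<forall>i < length ts. {xs ! i, xs ! Suc i} \<in> tedges G \<and> ts ! i \<in> tlabel G {xs ! i, xs ! Suc i}) \<and>
     sorted_wrt (<) ts)"

definition strict_reach_arcs :: "'a tgraph \<Rightarrow> ('a \<times> 'a) set" where
  "strict_reach_arcs G = {(u, v). u \<in> tverts G \<and> v \<in> tverts G \<and> u \<noteq> v \<and> strict_journey G u v}"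

definition digraph_iso :: "'a set \<Rightarrow> ('a \<times> 'a) set \<Rightarrow> 'b set \<Rightarrow> ('b \<times> 'b) set \<Rightarrow> bool" where
  "digraph_iso V1 A1 V2 A2 \<longleftrightarrow> (\<exists>f. bij_betw f V1 V2 \<and>
     (\<forall>u\<in>V1. \<forall>v\<in>V1. (u, v) \<in> A1 \<longleftrightarrow> (f u, f v) \<in> A2))"

end

theory Submission
  imports Defs
begin

lemma journey_cases:
  assumes "strict_journey G u v"
  shows "\<exists>x1 t0. {u,x1} \<in> tedges G \<and> t0 \<in> tlabel G {u,x1} \<and> x1 \<noteq> u \<and>
     (x1 = v \<or> (\<exists>x2 t1. {x1,x2} \<in> tedges G \<and> t1 \<in> tlabel G {x1,x2} \<and> t0 < t1 \<and> x2 \<noteq> u \<and> x2 \<noteq> x1 \<and>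
       (x2 = v \<or> (\<exists>x3 t2. {x2,x3} \<in> tedges G \<and> t2 \<in> tlabel G {x2,x3} \<and> t1 < t2 \<and> x3 \<notin> {u,x1,x2}))))"
proof -
  obtain xs ts where L: "length xs \<ge> 2" and D: "distinct xs" and H: "hd xs = u" and La: "last xs = v"
    and T: "length ts = length xs - 1"
    and E: "\<forall>i < length ts. {xs ! i, xs ! Suc i} \<in> tedges G \<and> ts ! i \<in> tlabel G {xs ! i, xs ! Suc i}"
    and S: "sorted_wrt (<) ts"
    using assms unfolding strict_journey_def by blast
  have u0: "xs ! 0 = u" using H L by (cases xs) auto
  have ne: "xs \<noteq> []" using L by auto
  have lastn: "last xs = xs ! (length xs - 1)" using L by (subst last_conv_nth) auto
  have dn: "\<And>i j. i < length xs \<Longrightarrow> j < length xs \<Longrightarrow> i \<noteq> j \<Longrightarrow> xs ! i \<noteq> xs ! j"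
    using D by (simp add: nth_eq_iff_index_eq)
  have s: "\<And>i j. i < j \<Longrightarrow> j < length ts \<Longrightarrow> ts ! i < ts ! j"
    using S by (simp add: sorted_wrt_iff_nth_less)
  show ?thesis
  proof (intro exI conjI)
    show "{u, xs!1} \<in> tedges G" "ts!0 \<in> tlabel G {u, xs!1}" using E T L u0 by auto
    show "xs!1 \<noteq> u" using dn[of 1 0] L u0 ne by (simp add: eval_nat_numeral)
    show "xs ! 1 = v \<or> (\<exists>x2 t1. {xs!1,x2} \<in> tedges G \<and> t1 \<in> tlabel G {xs!1,x2} \<and> ts!0 < t1 \<and> x2 \<noteq> u \<and> x2 \<noteq> xs!1 \<and>
       (x2 = v \<or> (\<exists>x3 t2. {x2,x3} \<in> tedges G \<and> t2 \<in> tlabel G {x2,x3} \<and> t1 < t2 \<and> x3 \<notin> {u,xs!1,x2})))"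
    proof (cases "xs!1 = v")
      case False
      then have L3: "length xs \<ge> 3" using L La lastn by (cases "length xs = 2") auto
      show ?thesis
      proof (rule disjI2, intro exI conjI)
        show "{xs!1, xs!2} \<in> tedges G" "ts!1 \<in> tlabel G {xs!1, xs!2}" using E T L3
          by (auto dest: spec[of _ 1] simp: numeral_2_eq_2)
        show "ts!0 < ts!1" using s[of 0 1] T L3 by auto
        show "xs!2 \<noteq> u" "xs!2 \<noteq> xs!1" using dn[of 2 0] dn[of 2 1] L3 u0 ne by (auto simp add: eval_nat_numeral)
        show "xs ! 2 = v \<or> (\<exists>x3 t2. {xs!2,x3} \<in> tedges G \<and> t2 \<in> tlabel G {xs!2,x3} \<and> ts!1 < t2 \<and> x3 \<notin> {u,xs!1,xs!2})"
        proof (cases "xs!2 = v")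
          case False
          then have L4: "length xs \<ge> 4" using L3 La lastn by (cases "length xs = 3") auto
          have a: "{xs!2, xs!3} \<in> tedges G" "ts!2 \<in> tlabel G {xs!2, xs!3}" using E T L4
              by (auto dest: spec[of _ 2] simp: numeral_3_eq_3 numeral_2_eq_2)
          have b: "ts!1 < ts!2" using s[of 1 2] T L4 by auto
          have c: "xs!3 \<notin> {u, xs!1, xs!2}" using dn[of 3 0] dn[of 3 1] dn[of 3 2] L4 u0 ne by (auto simp add: eval_nat_numeral)
          show ?thesis using a b c by blast
        qed simp
      qed
    qed simp
  qed
qed

definition G0 :: "nat tgraph" where
  "G0 = ({0,1,2,3}, {{0,1},{1,2},{2,3}},
     (\<lambda>e. if e = {0,1} then {1} else if e = {1,2} then {1,2} else {2}))"

lemma G0_simps: "tverts G0 = {0,1,2,3}" "tedges G0 = {{0,1},{1,2},{2,3}}"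
  "tlabel G0 = (\<lambda>e. if e = {0,1} then {1} else if e = {1,2} then {1,2} else {2})"
  by (simp_all add: G0_def tverts_def tedges_def tlabel_def)

lemma G0_lab: "tlabel G0 {0,1} = {1}" "tlabel G0 {1,0} = {1}" "tlabel G0 {1,2} = {1,2}" "tlabel G0 {2,1} = {1,2}"
   "tlabel G0 {2,3} = {2}" "tlabel G0 {3,2} = {2}"
   "tlabel G0 {0,Suc 0} = {1}" "tlabel G0 {Suc 0,0} = {1}" "tlabel G0 {Suc 0,2} = {1,2}" "tlabel G0 {2,Suc 0} = {1,2}"
  by (simp_all add: G0_simps doubleton_eq_iff insert_commute)

lemma G0_tg: "temporal_graph G0"
  unfolding temporal_graph_def
proof (intro conjI ballI)
  show "finite (tverts G0)" by (simp add: G0_simps)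
  fix e assume "e \<in> tedges G0"
  then have "e = {0,1} \<or> e = {1,2} \<or> e = {2,3}" by (simp add: G0_simps)
  then show "tlabel G0 e \<noteq> {}" by (elim disjE) (simp_all add: G0_lab)
next
  fix e assume "e \<in> tedges G0"
  then have "e = {0,1} \<or> e = {1,2} \<or> e = {2,3}" by (simp add: G0_simps)
  then show "\<exists>u v. u \<noteq> v \<and> u \<in> tverts G0 \<and> v \<in> tverts G0 \<and> e = {u, v}"
  proof (elim disjE)
    assume "e = {0,1}" then show ?thesis by (intro exI[of _ "0::nat"] exI[of _ "1::nat"]) (simp add: G0_simps)
  next
    assume "e = {1,2}" then show ?thesis by (intro exI[of _ "1::nat"] exI[of _ "2::nat"]) (simp add: G0_simps)
  next
    assume "e = {2,3}" then show ?thesis by (intro exI[of _ "2::nat"] exI[of _ "3::nat"]) (simp add: G0_simps)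
  qed
qed

lemma G0_edge: "{u,x} \<in> tedges G0 \<longleftrightarrow> (u=0\<and>x=1 \<or> u=1\<and>x=0 \<or> u=1\<and>x=2 \<or> u=2\<and>x=1 \<or> u=2\<and>x=3 \<or> u=3\<and>x=2)"
  unfolding G0_simps by (simp add: doubleton_eq_iff) 

lemma G0_nj20: "\<not> strict_journey G0 2 0"
proof
  assume "strict_journey G0 2 0"
  from journey_cases[OF this] show False unfolding G0_edge by (auto simp: G0_lab)
qed
lemma G0_nj31: "\<not> strict_journey G0 3 1"
proof
  assume "strict_journey G0 3 1"
  from journey_cases[OF this] show False unfolding G0_edge by (auto simp: G0_lab)
qed
lemma G0_nj30: "\<not> strict_journey G0 3 0"
proof
  assume "strict_journey G0 3 0"
  from journey_cases[OF this] show False unfolding G0_edge by (auto simp: G0_lab)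
qed
lemma G0_nj03: "\<not> strict_journey G0 0 3"
proof
  assume "strict_journey G0 0 3"
  from journey_cases[OF this] show False unfolding G0_edge by (auto simp: G0_lab)
qed

lemma G0_j02: "strict_journey G0 0 2"
  unfolding strict_journey_def
  apply (rule exI[of _ "[0,1,2]"], rule exI[of _ "[1,2]"])
  by (auto simp: G0_edge G0_lab less_Suc_eq nth_Cons')
lemma G0_j13: "strict_journey G0 1 3"
  unfolding strict_journey_def
  apply (rule exI[of _ "[1,2,3]"], rule exI[of _ "[1,2]"])
  by (auto simp: G0_edge G0_lab less_Suc_eq nth_Cons')

lemma single_journey:
  assumes "{u,v} \<in> tedges G" "t \<in> tlabel G {u,v}" "u \<noteq> v"
  shows "strict_journey G u v"
  unfolding strict_journey_def
  apply (rule exI[of _ "[u,v]"], rule exI[of _ "[t]"])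
  using assms by auto

lemma four_journey:
  assumes "{a,b} \<in> tedges G" "t0 \<in> tlabel G {a,b}" "{b,c} \<in> tedges G" "t1 \<in> tlabel G {b,c}"
    "{c,d} \<in> tedges G" "t2 \<in> tlabel G {c,d}" "t0 < t1" "t1 < t2" "distinct [a,b,c,d]"
  shows "strict_journey G a d"
  unfolding strict_journey_def
  apply (rule exI[of _ "[a,b,c,d]"], rule exI[of _ "[t0,t1,t2]"])
  using assms by (auto simp: less_Suc_eq nth_Cons')

theorem mainTheorem2:
  shows "\<exists>G :: nat tgraph. temporal_graph G \<and>
           \<not> (\<exists>H :: nat tgraph. temporal_graph H \<and> simple_tgraph H \<and>
                digraph_iso (tverts G) (strict_reach_arcs G) (tverts H) (strict_reach_arcs H))"
proof (intro exI[of _ G0] conjI notI)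
  show "temporal_graph G0" by (rule G0_tg)
next
  assume "\<exists>H :: nat tgraph. temporal_graph H \<and> simple_tgraph H \<and>
                digraph_iso (tverts G0) (strict_reach_arcs G0) (tverts H) (strict_reach_arcs H)"
  then obtain H :: "nat tgraph" and f where tg: "temporal_graph H" and sg: "simple_tgraph H"
    and bij: "bij_betw f {0,1,2,3} (tverts H)"
    and iso: "\<forall>u\<in>{0,1,2,3}. \<forall>v\<in>{0,1,2,3}. (u,v) \<in> strict_reach_arcs G0 \<longleftrightarrow> (f u, f v) \<in> strict_reach_arcs H"
    unfolding digraph_iso_def G0_simps by blast
  define a b c d where "a = f 0" and "b = f 1" and "c = f 2" and "d = f 3"
  have inj: "inj_on f {0,1,2,3}" using bij by (rule bij_betw_imp_inj_on)
  have dist: "a \<noteq> b" "a \<noteq> c" "a \<noteq> d" "b \<noteq> c" "b \<noteq> d" "c \<noteq> d"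
    unfolding a_def b_def c_def d_def using inj by (auto dest: inj_onD)
  have VH: "tverts H = {a,b,c,d}"
    using bij_betw_imp_surj_on[OF bij] unfolding a_def b_def c_def d_def by auto
  have arcG: "\<And>x y. (x,y) \<in> strict_reach_arcs G0 \<longleftrightarrow> x \<in> {0,1,2,3} \<and> y \<in> {0,1,2,3} \<and> x \<noteq> y \<and> strict_journey G0 x y"
    by (simp add: strict_reach_arcs_def G0_simps)
  have arcH: "\<And>x y. (x,y) \<in> strict_reach_arcs H \<longleftrightarrow> x \<in> tverts H \<and> y \<in> tverts H \<and> x \<noteq> y \<and> strict_journey H x y"
    by (simp add: strict_reach_arcs_def)
  have jac: "strict_journey H a c"
    using iso arcG[of 0 2] G0_j02 arcH[of a c] unfolding a_def c_def by auto
  have jbd: "strict_journey H b d"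
    using iso arcG[of 1 3] G0_j13 arcH[of b d] unfolding b_def d_def by auto
  have nad: "\<not> strict_journey H a d"
    using iso arcG[of 0 3] G0_nj03 arcH[of a d] dist VH unfolding a_def d_def by auto
  have nca: "\<not> strict_journey H c a"
    using iso arcG[of 2 0] G0_nj20 arcH[of c a] dist VH unfolding a_def c_def by auto
  have ndb: "\<not> strict_journey H d b"
    using iso arcG[of 3 1] G0_nj31 arcH[of d b] dist VH unfolding b_def d_def by auto
  have nda: "\<not> strict_journey H d a"
    using iso arcG[of 3 0] G0_nj30 arcH[of d a] dist VH unfolding a_def d_def by auto
  have EH: "e = {a,b} \<or> e = {b,c} \<or> e = {c,d}" if e: "e \<in> tedges H" for e
  proof -
    have tgd: "\<forall>e\<in>tedges H. \<exists>u v. u \<noteq> v \<and> u \<in> tverts H \<and> v \<in> tverts H \<and> e = {u, v}"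
      "\<forall>e\<in>tedges H. tlabel H e \<noteq> {}"
      using temporal_graph_def[THEN iffD1, OF tg] by auto
    from bspec[OF tgd(1) e] obtain u v where uv: "u \<noteq> v" "u \<in> {a,b,c,d}" "v \<in> {a,b,c,d}" "e = {u,v}"
      unfolding VH by blast
    from bspec[OF tgd(2) e] obtain t where t: "t \<in> tlabel H e" by blast
    have j1: "strict_journey H u v" using single_journey[of u v H t] e t uv by simp
    have j2: "strict_journey H v u" using single_journey[of v u H t] e t uv by (simp add: insert_commute)
    show ?thesis using uv j1 j2 nad nca ndb nda by (auto simp: insert_commute)
  qed
  from journey_cases[OF jac] obtain x1 t0 where
     A1: "{a,x1} \<in> tedges H" "t0 \<in> tlabel H {a,x1}" "x1 \<noteq> a" and
     A2: "x1 = c \<or> (\<exists>x2 t1. {x1,x2} \<in> tedges H \<and> t1 \<in> tlabel H {x1,x2} \<and> t0 < t1 \<and> x2 \<noteq> a \<and> x2 \<noteq> x1 \<and>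
       (x2 = c \<or> (\<exists>x3 t2. {x2,x3} \<in> tedges H \<and> t2 \<in> tlabel H {x2,x3} \<and> t1 < t2 \<and> x3 \<notin> {a,x1,x2})))" by blast
  have x1: "x1 = b" using EH[OF A1(1)] dist A1(3) by (auto simp: doubleton_eq_iff)
  obtain t1 where B: "{b,c} \<in> tedges H" "t1 \<in> tlabel H {b,c}" "t0 < t1"
  proof -
    from A2 x1 dist obtain x2 t1 where "{b,x2} \<in> tedges H" "t1 \<in> tlabel H {b,x2}" "t0 < t1" "x2 \<noteq> a" by blast
    moreover then have "x2 = c" using EH[of "{b,x2}"] dist by (auto simp: doubleton_eq_iff)
    ultimately show ?thesis using that by blast
  qed
  from journey_cases[OF jbd] obtain y1 s0 where
     C1: "{b,y1} \<in> tedges H" "s0 \<in> tlabel H {b,y1}" "y1 \<noteq> b" and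
     C2: "y1 = d \<or> (\<exists>x2 t1. {y1,x2} \<in> tedges H \<and> t1 \<in> tlabel H {y1,x2} \<and> s0 < t1 \<and> x2 \<noteq> b \<and> x2 \<noteq> y1 \<and>
       (x2 = d \<or> (\<exists>x3 t2. {x2,x3} \<in> tedges H \<and> t2 \<in> tlabel H {x2,x3} \<and> t1 < t2 \<and> x3 \<notin> {b,y1,x2})))" by blast
  have y1: "y1 = a \<or> y1 = c" using EH[OF C1(1)] dist C1(3) by (auto simp: doubleton_eq_iff)
  from C2 dist y1 obtain y2 s1 where D: "{y1,y2} \<in> tedges H" "s1 \<in> tlabel H {y1,y2}" "s0 < s1" "y2 \<noteq> b" by blast
  have y1c: "y1 = c"
  proof (rule ccontr)
    assume "y1 \<noteq> c" then have "y1 = a" using y1 by blast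
    then show False using EH[OF D(1)] D(4) dist by (auto simp: doubleton_eq_iff)
  qed
  have y2: "y2 = d" using EH[OF D(1)] D(4) dist y1c by (auto simp: doubleton_eq_iff)
  have "card (tlabel H {b,c}) = 1" using sg B(1) unfolding simple_tgraph_def by blast
  then obtain z where "tlabel H {b,c} = {z}" by (rule card_1_singletonE)
  then have "s0 = t1" using B(2) C1(2) y1c by simp
  have "strict_journey H a d"
    using four_journey[of a b H t0 c t1 d s1] A1 x1 B D y1c y2 \<open>s0 = t1\<close> dist by simp
  with nad show False by contradiction
qed

end
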